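(* If $G$ is a connected triangle-free graph on $n\ge 3$ vertices, then $\gamma_{rdR}(G)\le 2\gamma_{rR}(G)-2$.
   Context: All graphs are finite and simple. An RDRD function of $G$ is a function $f:V(G)\to\{0,1,2,3\}$ such that every vertex with value $0$ has at least two neighbors with value $2$ or at least one neighbor with value $3$, every vertex with value $1$ has a neighbor with value $2$ or $3$, and the subgraph induced by the vertices with value $0$ has no isolated vertices; $\gamma_{rdR}(G)$ is the minimum of $\sum_v f(v)$ over RDRD functions. A restrained Roman dominating function (RRD function) of $G$ is a function $f:V(G)\to\{0,1,2\}$ such that every vertex with value $0$ has a neighbor with value $2$, and the subgraph induced by the vertices with value $0$ has no isolated vertices; $\gamma_{rR}(G)$ is the minimum of $\sum_v f(v)$ over RRD functions. *)

theory Defs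
  imports Main
begin

definition simple_graph :: "'a set \<Rightarrow> ('a \<Rightarrow> 'a \<Rightarrow> bool) \<Rightarrow> bool" where
  "simple_graph V E \<longleftrightarrow> finite V \<and> (\<forall>x y. E x y \<longrightarrow> x \<in> V \<and> y \<in> V)
     \<and> (\<forall>x y. E x y \<longrightarrow> E y x) \<and> (\<forall>x. \<not> E x x)"

definition connected_graph :: "'a set \<Rightarrow> ('a \<Rightarrow> 'a \<Rightarrow> bool) \<Rightarrow> bool" where
  "connected_graph V E \<longleftrightarrow> V \<noteq> {} \<and> (\<forall>x\<in>V. \<forall>y\<in>V. E\<^sup>*\<^sup>* x y)"

definition triangle_free :: "'a set \<Rightarrow> ('a \<Rightarrow> 'a \<Rightarrow> bool) \<Rightarrow> bool" where
  "triangle_free V E \<longleftrightarrow> \<not> (\<exists>x\<in>V. \<exists>y\<in>V. \<exists>z\<in>V. E x y \<and> E y z \<and> E x z)"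

definition is_RDRDF :: "'a set \<Rightarrow> ('a \<Rightarrow> 'a \<Rightarrow> bool) \<Rightarrow> ('a \<Rightarrow> nat) \<Rightarrow> bool" where
  "is_RDRDF V E f \<longleftrightarrow>
     (\<forall>v\<in>V. f v \<le> 3) \<and>
     (\<forall>v\<in>V. f v = 0 \<longrightarrow>
        ((\<exists>u\<in>V. \<exists>w\<in>V. u \<noteq> w \<and> E v u \<and> E v w \<and> f u = 2 \<and> f w = 2)
         \<or> (\<exists>u\<in>V. E v u \<and> f u = 3))) \<and>
     (\<forall>v\<in>V. f v = 1 \<longrightarrow> (\<exists>u\<in>V. E v u \<and> f u \<ge> 2)) \<and>
     (\<forall>v\<in>V. f v = 0 \<longrightarrow> (\<exists>u\<in>V. E v u \<and> f u = 0))"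

definition is_RRDF :: "'a set \<Rightarrow> ('a \<Rightarrow> 'a \<Rightarrow> bool) \<Rightarrow> ('a \<Rightarrow> nat) \<Rightarrow> bool" where
  "is_RRDF V E f \<longleftrightarrow>
     (\<forall>v\<in>V. f v \<le> 2) \<and>
     (\<forall>v\<in>V. f v = 0 \<longrightarrow> (\<exists>u\<in>V. E v u \<and> f u = 2)) \<and>
     (\<forall>v\<in>V. f v = 0 \<longrightarrow> (\<exists>u\<in>V. E v u \<and> f u = 0))"

definition gamma_rdR :: "'a set \<Rightarrow> ('a \<Rightarrow> 'a \<Rightarrow> bool) \<Rightarrow> nat" where
  "gamma_rdR V E = (LEAST w. \<exists>f. is_RDRDF V E f \<and> w = (\<Sum>v\<in>V. f v))"

definition gamma_rR :: "'a set \<Rightarrow> ('a \<Rightarrow> 'a \<Rightarrow> bool) \<Rightarrow> nat" where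
  "gamma_rR V E = (LEAST w. \<exists>f. is_RRDF V E f \<and> w = (\<Sum>v\<in>V. f v))"

end

theory Submission
  imports Defs
begin

lemma path_exists:
  assumes sg: "simple_graph V E" and cg: "connected_graph V E" and c3: "card V \<ge> 3"
  shows "\<exists>a b c. a\<in>V \<and> b\<in>V \<and> c\<in>V \<and> E a b \<and> E b c \<and> a \<noteq> c"
proof (rule ccontr)
  assume nt: "\<not> ?thesis"
  have fin: "finite V" using sg unfolding simple_graph_def by simp
  have inV: "\<And>x y. E x y \<Longrightarrow> x \<in> V \<and> y \<in> V" using sg unfolding simple_graph_def by simp
  have H: "\<And>a b c. E a b \<Longrightarrow> E b c \<Longrightarrow> a = c"
  proof -
    fix a b c assume "E a b" "E b c"
    moreover have "a \<in> V" "b \<in> V" "c \<in> V" using inV \<open>E a b\<close> \<open>E b c\<close> by blast+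
    ultimately show "a = c" using nt by blast
  qed
  have sym: "\<And>x y. E x y \<Longrightarrow> E y x" using sg unfolding simple_graph_def by simp
  obtain x where xV: "x \<in> V" using cg unfolding connected_graph_def by blast
  have reach: "\<And>z. E\<^sup>*\<^sup>* x z \<Longrightarrow> z = x \<or> E x z"
  proof -
    fix z assume "E\<^sup>*\<^sup>* x z"
    then show "z = x \<or> E x z"
    proof (induction rule: rtranclp_induct)
      case base then show ?case by simp
    next
      case (step y z)
      show ?case
      proof (cases "y = x")
        case True then show ?thesis using step.hyps(2) by simp
      next
        case False
        then have "E x y" using step.IH by simp
        then have "x = z" using H step.hyps(2) by metis
        then show ?thesis by simp
      qed
    qed
  qed
  have "V \<noteq> {x}" using c3 by auto
  then obtain z where zV: "z \<in> V" and zx: "z \<noteq> x" using xV by blast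
  have "E x z" using reach[of z] cg xV zV zx unfolding connected_graph_def by blast
  have "V \<subseteq> {x, z}"
  proof
    fix w assume wV: "w \<in> V"
    have "w = x \<or> E x w" using reach[of w] cg xV wV unfolding connected_graph_def by blast
    moreover have "E x w \<Longrightarrow> z = w" using H[OF sym[OF \<open>E x z\<close>], of w] by simp
    ultimately show "w \<in> {x, z}" by auto
  qed
  hence "card V \<le> card {x, z}" by (simp add: card_mono)
  also have "\<dots> \<le> 2" by (simp add: card_insert_if)
  finally show False using c3 by simp
qed

theorem proposition2p7:
  fixes V :: "'a set" and E :: "'a \<Rightarrow> 'a \<Rightarrow> bool"
  assumes "simple_graph V E"
    and "connected_graph V E"
    and "triangle_free V E"
    and "card V \<ge> 3"
  shows "gamma_rdR V E \<le> 2 * gamma_rR V E - 2"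
proof -
  have fin: "finite V" using assms(1) unfolding simple_graph_def by simp
  have inV: "\<And>x y. E x y \<Longrightarrow> x \<in> V \<and> y \<in> V" using assms(1) unfolding simple_graph_def by simp
  have irr: "\<And>x. \<not> E x x" using assms(1) unfolding simple_graph_def by simp
  have ex1: "\<exists>f. is_RRDF V E f \<and> card V = (\<Sum>v\<in>V. f v)"
    by (rule exI[of _ "\<lambda>_. 1"]) (simp add: is_RRDF_def)
  obtain f where fR: "is_RRDF V E f" and fw: "gamma_rR V E = (\<Sum>v\<in>V. f v)"
  proof -
    have ex: "\<exists>w. \<exists>f. is_RRDF V E f \<and> w = (\<Sum>v\<in>V. f v)" using ex1 by blast
    show ?thesis using LeastI_ex[OF ex] that unfolding gamma_rR_def by blast
  qed
  have minf: "gamma_rR V E \<le> card V"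
    unfolding gamma_rR_def by (rule Least_le) (use ex1 in blast)
  have rdle: "\<And>g. is_RDRDF V E g \<Longrightarrow> gamma_rdR V E \<le> (\<Sum>v\<in>V. g v)"
    unfolding gamma_rdR_def by (rule Least_le) blast
  let ?T = "{v\<in>V. f v = 2}"
  show ?thesis
  proof (cases "card ?T \<ge> 2")
    case True
    define g where "g v = (if f v = 0 then 0 else if f v = 1 then 2 else (3::nat))" for v
    have gR: "is_RDRDF V E g"
      unfolding is_RDRDF_def
    proof (intro conjI ballI impI)
      fix v assume "v \<in> V" show "g v \<le> 3" unfolding g_def by simp
    next
      fix v assume "v \<in> V" "g v = 0"
      hence "f v = 0" unfolding g_def by (simp split: if_splits)
      then obtain u where "u \<in> V" "E v u" "f u = 2" using fR \<open>v \<in> V\<close> unfolding is_RRDF_def by blast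
      hence "u \<in> V \<and> E v u \<and> g u = 3" unfolding g_def by simp
      thus "(\<exists>u\<in>V. \<exists>w\<in>V. u \<noteq> w \<and> E v u \<and> E v w \<and> g u = 2 \<and> g w = 2) \<or> (\<exists>u\<in>V. E v u \<and> g u = 3)" by blast
    next
      fix v assume "v \<in> V" "g v = 1"
      hence False unfolding g_def by (simp split: if_splits)
      thus "\<exists>u\<in>V. E v u \<and> g u \<ge> 2" by blast
    next
      fix v assume "v \<in> V" "g v = 0"
      hence "f v = 0" unfolding g_def by (simp split: if_splits)
      then obtain u where "u \<in> V" "E v u" "f u = 0" using fR \<open>v \<in> V\<close> unfolding is_RRDF_def by blast
      hence "u \<in> V \<and> E v u \<and> g u = 0" unfolding g_def by simp
      thus "\<exists>u\<in>V. E v u \<and> g u = 0" by blast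
    qed
    have pt: "\<And>v. v \<in> V \<Longrightarrow> g v + (if f v = 2 then 1 else 0) = 2 * f v"
    proof -
      fix v assume "v \<in> V"
      hence "f v \<le> 2" using fR unfolding is_RRDF_def by blast
      hence "f v = 0 \<or> f v = 1 \<or> f v = 2" by linarith
      thus "g v + (if f v = 2 then 1 else 0) = 2 * f v" unfolding g_def by auto
    qed
    have "(\<Sum>v\<in>V. g v) + card ?T = (\<Sum>v\<in>V. g v + (if f v = 2 then 1 else 0))"
    proof -
      have "V \<inter> {v. f v = 2} = ?T" by blast
      thus ?thesis using fin by (simp add: sum.distrib sum.If_cases)
    qed
    also have "\<dots> = (\<Sum>v\<in>V. 2 * f v)" by (rule sum.cong) (simp_all add: pt)
    also have "\<dots> = 2 * gamma_rR V E" using fw by (simp add: sum_distrib_left)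
    finally show ?thesis using rdle[OF gR] True by linarith
  next
    case False
    have le1: "\<And>u u'. u \<in> V \<Longrightarrow> u' \<in> V \<Longrightarrow> f u = 2 \<Longrightarrow> f u' = 2 \<Longrightarrow> u = u'"
    proof (rule ccontr)
      fix u u' assume "u \<in> V" "u' \<in> V" "f u = 2" "f u' = 2" "u \<noteq> u'"
      hence "{u, u'} \<subseteq> ?T" by auto
      hence "card {u, u'} \<le> card ?T" using fin by (simp add: card_mono)
      thus False using False \<open>u \<noteq> u'\<close> by simp
    qed
    have no0: "\<And>v. v \<in> V \<Longrightarrow> f v \<ge> 1"
    proof (rule ccontr)
      fix v assume vV: "v \<in> V" and "\<not> f v \<ge> 1"
      hence "f v = 0" by simp
      obtain u where u: "u \<in> V" "E v u" "f u = 2"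
        using fR vV \<open>f v = 0\<close> unfolding is_RRDF_def by blast
      obtain x where x: "x \<in> V" "E v x" "f x = 0"
        using fR vV \<open>f v = 0\<close> unfolding is_RRDF_def by blast
      obtain u' where u': "u' \<in> V" "E x u'" "f u' = 2"
        using fR x(1,3) unfolding is_RRDF_def by blast
      have "u = u'" using le1[OF u(1) u'(1) u(3) u'(3)] .
      hence "E x u" using u' by simp
      hence "\<exists>x\<in>V. \<exists>y\<in>V. \<exists>z\<in>V. E x y \<and> E y z \<and> E x z"
        using vV x(1,2) u(1,2) by blast
      then show False using assms(3) unfolding triangle_free_def by blast
    qed
    have "card V = (\<Sum>v\<in>V. (1::nat))" by simp
    also have "\<dots> \<le> (\<Sum>v\<in>V. f v)" by (rule sum_mono) (rule no0)
    finally have "card V \<le> gamma_rR V E" unfolding fw .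
    obtain a b c where abc: "a\<in>V" "b\<in>V" "c\<in>V" "E a b" "E b c" "a \<noteq> c"
      using path_exists[OF assms(1,2,4)] by blast
    have ba: "b \<noteq> a" "b \<noteq> c" using abc irr by auto
    define g where "g v = (if v = a \<or> v = c then 1 else (2::nat))" for v
    have gR: "is_RDRDF V E g"
      unfolding is_RDRDF_def
    proof (intro conjI ballI impI)
      fix v assume "v \<in> V" show "g v \<le> 3" unfolding g_def by simp
    next
      fix v assume "v \<in> V" "g v = 0"
      hence False unfolding g_def by (simp split: if_splits)
      thus "(\<exists>u\<in>V. \<exists>w\<in>V. u \<noteq> w \<and> E v u \<and> E v w \<and> g u = 2 \<and> g w = 2) \<or> (\<exists>u\<in>V. E v u \<and> g u = 3)" by blast
    next
      fix v assume "v \<in> V" "g v = 1"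
      hence "v = a \<or> v = c" unfolding g_def by (simp split: if_splits)
      moreover have "g b = 2" unfolding g_def using ba by simp
      moreover have "E c b" using abc(5) assms(1) unfolding simple_graph_def by simp
      ultimately show "\<exists>u\<in>V. E v u \<and> g u \<ge> 2" using abc(2,4) by auto
    next
      fix v assume "v \<in> V" "g v = 0"
      hence False unfolding g_def by (simp split: if_splits)
      thus "\<exists>u\<in>V. E v u \<and> g u = 0" by blast
    qed
    have pt: "\<And>v. g v + (if v \<in> {a, c} then 1 else 0) = 2"
      unfolding g_def by auto
    have "(\<Sum>v\<in>V. g v) + card {a, c} = (\<Sum>v\<in>V. g v + (if v \<in> {a, c} then 1 else 0))"
    proof -
      have "V \<inter> {v. v = a \<or> v = c} = {a, c}" using abc by blast
      thus ?thesis using fin by (simp add: sum.distrib sum.If_cases)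
    qed
    also have "\<dots> = 2 * card V" using pt by simp
    finally have "(\<Sum>v\<in>V. g v) + 2 = 2 * card V" using abc(6) by simp
    thus ?thesis using rdle[OF gR] \<open>card V \<le> gamma_rR V E\<close> by linarith
  qed
qed

end
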